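(* Let $q\neq 2$ be a prime power with $q\equiv -1\pmod 3$, let $G=\mathrm{SU}_3(q)$, and let $\mathcal{C}=C_3^{(0,l)}$ for some $0\leq l\leq 2$. Then $K_{\mathcal{C}}$ is irreducible.
   Context: $\mathrm{SU}_3(q)$ is the group of determinant-one matrices $M\in\mathrm{GL}_3(q^2)$ with $M^*JM=J$, where $J$ has ones on the anti-diagonal and zeros elsewhere and $M^*$ is the transpose of $M$ with every entry raised to the $q$-th power. Let $\xi$ be a generator of $\mathbb{F}_{q^2}^\times$. For $0\leq l\leq 2$, $C_3^{(0,l)}$ is the $\mathrm{SU}_3(q)$-conjugacy class of $\begin{pmatrix}1&\xi^{l(q-1)}&\alpha\\0&1&-\xi^{-l(q-1)}\\0&0&1\end{pmatrix}$ where $\alpha\in\mathbb{F}_{q^2}^\times$ satisfies $\alpha+\alpha^q+1=0$. For a finite group $G$ and a subset $\mathcal{C}\subseteq G\setminus\{1\}$ closed under conjugation, the Killing form is $K_{\mathcal{C}}(a,b)=|C_G(ab)\cap\mathcal{C}|$ on the basis $\mathcal{C}$; it is irreducible if the graph with vertex set $\mathcal{C}$, in which distinct $a,b$ are adjacent iff $C_G(ab)\cap\mathcal{C}\neq\emptyset$, is connected. *)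

theory Defs
  imports "HOL-Analysis.Analysis"
begin

text \<open>Matrices are 3x3 matrices over a finite field 'a (playing the role of F_{q^2}).\<close>

definition prime_power :: "nat \<Rightarrow> bool" where
  "prime_power q \<longleftrightarrow> (\<exists>p k. prime p \<and> k > 0 \<and> q = p ^ k)"

definition Jmat :: "'a::{zero,one} ^3^3" where
  "Jmat = vector [vector [0,0,1], vector [0,1,0], vector [1,0,0]]"

definition conj_star :: "nat \<Rightarrow> 'a::field ^3^3 \<Rightarrow> 'a ^3^3" where
  "conj_star q M = transpose (\<chi> i j. (M $ i $ j) ^ q)"

definition SU3 :: "nat \<Rightarrow> ('a::field ^3^3) set" where
  "SU3 q = {M. det M = 1 \<and> conj_star q M ** Jmat ** M = Jmat}"

definition conj_class :: "('a::field ^3^3) set \<Rightarrow> 'a ^3^3 \<Rightarrow> ('a ^3^3) set" where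
  "conj_class G x = {g ** x ** matrix_inv g | g. g \<in> G}"

definition centralizer_in :: "('a::field ^3^3) set \<Rightarrow> 'a ^3^3 \<Rightarrow> ('a ^3^3) set" where
  "centralizer_in G x = {g \<in> G. g ** x = x ** g}"

definition killing_form :: "('a::field ^3^3) set \<Rightarrow> ('a ^3^3) set \<Rightarrow> 'a^3^3 \<Rightarrow> 'a^3^3 \<Rightarrow> nat" where
  "killing_form G C a b = card (centralizer_in G (a ** b) \<inter> C)"

definition killing_graph :: "('a::field ^3^3) set \<Rightarrow> ('a ^3^3) set \<Rightarrow> (('a^3^3) \<times> ('a^3^3)) set" where
  "killing_graph G C = {(a, b). a \<in> C \<and> b \<in> C \<and> a \<noteq> b \<and> centralizer_in G (a ** b) \<inter> C \<noteq> {}}"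

definition killing_irreducible :: "('a::field ^3^3) set \<Rightarrow> ('a ^3^3) set \<Rightarrow> bool" where
  "killing_irreducible G C \<longleftrightarrow> C \<noteq> {} \<and> (\<forall>a\<in>C. \<forall>b\<in>C. (a, b) \<in> (killing_graph G C)\<^sup>*)"

definition rep_C3 :: "nat \<Rightarrow> 'a::field \<Rightarrow> 'a \<Rightarrow> nat \<Rightarrow> 'a ^3^3" where
  "rep_C3 q \<xi> \<alpha> l = vector [vector [1, \<xi> ^ (l * (q - 1)), \<alpha>],
                               vector [0, 1, - inverse (\<xi> ^ (l * (q - 1)))],
                               vector [0, 0, 1]]"

definition C3_class :: "nat \<Rightarrow> 'a::field \<Rightarrow> 'a \<Rightarrow> nat \<Rightarrow> ('a ^3^3) set" where
  "C3_class q \<xi> \<alpha> l = conj_class (SU3 q) (rep_C3 q \<xi> \<alpha> l)"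

end

theory Submission imports Defs "HOL-Computational_Algebra.Primes"
begin

lemma ff_power_card:
  fixes x :: "'a :: {field,finite}"
  shows "x ^ card (UNIV :: 'a set) = x"
proof (cases "x = 0")
  case False
  have "x * (\<Prod>y\<in>UNIV-{0}. x * y) = x * x ^ (card (UNIV :: 'a set) - 1) * \<Prod>(UNIV-{0})"
    by (simp add: prod.distrib mult_ac)
  also have "x * x ^ (card (UNIV :: 'a set) - 1) = x ^ Suc (card (UNIV :: 'a set) - 1)"
    by (subst power_Suc) auto
  also have "Suc (card (UNIV :: 'a set) - 1) = card (UNIV :: 'a set)"
    using finite_UNIV_card_ge_0[where ?'a = 'a] by simp
  also have "(\<Prod>y\<in>UNIV-{0}. x * y) = (\<Prod>y\<in>UNIV-{0}. y)"
    by (rule prod.reindex_bij_witness[of _ "\<lambda>y. y / x" "\<lambda>y. x * y"]) (use False in auto)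
  finally show ?thesis
    by simp
qed (use finite_UNIV_card_ge_0[where ?'a = 'a] in auto)

lemma ff_card_zero: "of_nat CARD('a::{field,finite}) = (0::'a)"
proof -
  have "(\<Sum>y\<in>UNIV. 1 + y) = (\<Sum>y\<in>(UNIV::'a set). y)"
    by (rule sum.reindex_bij_witness[of _ "\<lambda>y. y - 1" "\<lambda>y. 1 + y"]) auto
  then have "of_nat (card (UNIV::'a set)) * 1 + (\<Sum>y\<in>(UNIV::'a set). y) = (\<Sum>y\<in>(UNIV::'a set). y)"
    by (simp add: sum.distrib)
  then show ?thesis by simp
qed

lemma ff_CHAR_dvd_CARD: "CHAR('a::{field,finite}) dvd CARD('a)"
  using ff_card_zero[where 'a='a] of_nat_eq_0_iff_char_dvd by blast

lemma frob_facts: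
  fixes q :: nat
  assumes pp: "prime_power q" and card: "CARD('a::{field,finite}) = q ^ 2"
  shows "\<forall>x y::'a. (x + y) ^ q = x ^ q + y ^ q" and "\<forall>x::'a. (x ^ q) ^ q = x"
proof -
  obtain p k where p: "prime p" "k > 0" "q = p ^ k" using pp unfolding prime_power_def by blast
  have cpos: "CHAR('a) > 0" using finite_imp_CHAR_pos[of] by (simp add: finite_imp_CHAR_pos)
  have cpr: "prime CHAR('a)" using prime_CHAR_semidom[OF cpos] .
  have "CHAR('a) dvd p ^ (k * 2)" using ff_CHAR_dvd_CARD[where 'a='a] card p by (simp add: power_mult)
  hence "CHAR('a) dvd p" using cpr prime_dvd_power by blast
  hence cp: "CHAR('a) = p" using cpr p(1) by (simp add: primes_dvd_imp_eq)
  show "\<forall>x y::'a. (x + y) ^ q = x ^ q + y ^ q"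
    using freshmans_dream'[OF cpr, of q k] cp p by auto
  show "\<forall>x::'a. (x ^ q) ^ q = x"
    using ff_power_card[where 'a='a] card by (simp add: power_mult[symmetric] power2_eq_square)
qed

definition m3 :: "'a::zero \<Rightarrow> 'a \<Rightarrow> 'a \<Rightarrow> 'a \<Rightarrow> 'a \<Rightarrow> 'a \<Rightarrow> 'a \<Rightarrow> 'a \<Rightarrow> 'a \<Rightarrow> 'a^3^3" where
  "m3 a b c d e f g h i = vector [vector [a,b,c], vector [d,e,f], vector [g,h,i]]"

lemma m3_nth [simp]:
  "m3 a b c d e f g h i $ 1 $ 1 = a" "m3 a b c d e f g h i $ 1 $ 2 = b" "m3 a b c d e f g h i $ 1 $ 3 = c"
  "m3 a b c d e f g h i $ 2 $ 1 = d" "m3 a b c d e f g h i $ 2 $ 2 = e" "m3 a b c d e f g h i $ 2 $ 3 = f"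
  "m3 a b c d e f g h i $ 3 $ 1 = g" "m3 a b c d e f g h i $ 3 $ 2 = h" "m3 a b c d e f g h i $ 3 $ 3 = i"
  by (simp_all add: m3_def)

lemma m3_eta: "(M::'a::zero^3^3) = m3 (M$1$1) (M$1$2) (M$1$3) (M$2$1) (M$2$2) (M$2$3) (M$3$1) (M$3$2) (M$3$3)"
  by (simp add: vec_eq_iff forall_3)

lemma m3_eq_iff: "(m3 a b c d e f g h i = m3 a' b' c' d' e' f' g' h' i') \<longleftrightarrow>
   a = a' \<and> b = b' \<and> c = c' \<and> d = d' \<and> e = e' \<and> f = f' \<and> g = g' \<and> h = h' \<and> i = i'"
  by (auto simp: vec_eq_iff forall_3)

lemma m3_mult: "m3 a b c d e f g h i ** m3 a' b' c' d' e' f' g' h' i' =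
  m3 (a*a'+b*d'+c*g') (a*b'+b*e'+c*h') (a*c'+b*f'+c*i')
     (d*a'+e*d'+f*g') (d*b'+e*e'+f*h') (d*c'+e*f'+f*i')
     (g*a'+h*d'+i*g') (g*b'+h*e'+i*h') (g*c'+h*f'+i*i')"
  by (simp add: vec_eq_iff forall_3 matrix_matrix_mult_def sum_3)

lemma det_m3: "det (m3 a b c d e f g h i :: 'a::comm_ring_1^3^3) = a*e*i + b*f*g + c*d*h - a*f*h - b*d*i - c*e*g"
  by (simp add: det_3)

lemma conj_star_m3: "conj_star q (m3 a b c d e f g h i) = m3 (a^q) (d^q) (g^q) (b^q) (e^q) (h^q) (c^q) (f^q) (i^q)"
  by (simp add: conj_star_def vec_eq_iff forall_3 transpose_def)

lemma Jmat_m3: "Jmat = m3 0 0 1 0 1 0 1 0 0"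
  by (simp add: Jmat_def m3_def)

lemma mat1_m3: "(mat 1 :: 'a::{zero,one}^3^3) = m3 1 0 0 0 1 0 0 0 1"
  by (simp add: vec_eq_iff forall_3 mat_def)

lemma rep_m3: "rep_C3 q \<xi> \<alpha> l = m3 1 (\<xi> ^ (l * (q - 1))) \<alpha> 0 1 (- inverse (\<xi> ^ (l * (q - 1)))) 0 0 1"
  by (simp add: rep_C3_def m3_def)

lemma su3_m3_iff: "(m3 a b c d e f g h i :: 'a::field^3^3) \<in> SU3 q \<longleftrightarrow>
   a*e*i + b*f*g + c*d*h - a*f*h - b*d*i - c*e*g = 1 \<and>
   g^q*a + d^q*d + a^q*g = 0 \<and> g^q*b + d^q*e + a^q*h = 0 \<and> g^q*c + d^q*f + a^q*i = 1 \<and>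
   h^q*a + e^q*d + b^q*g = 0 \<and> h^q*b + e^q*e + b^q*h = 1 \<and> h^q*c + e^q*f + b^q*i = 0 \<and>
   i^q*a + f^q*d + c^q*g = 1 \<and> i^q*b + f^q*e + c^q*h = 0 \<and> i^q*c + f^q*f + c^q*i = 0"
  unfolding SU3_def by (simp add: det_m3 conj_star_m3 Jmat_m3 m3_mult m3_eq_iff)

lemma minv: assumes "det (A::'a::field^'n^'n) \<noteq> 0"
  shows "A ** matrix_inv A = mat 1" "matrix_inv A ** A = mat 1"
proof -
  have "invertible A" using assms invertible_det_nz by blast
  then have "\<exists>A'. A ** A' = mat 1 \<and> A' ** A = mat 1" unfolding invertible_def by blast
  then have "A ** matrix_inv A = mat 1 \<and> matrix_inv A ** A = mat 1"
    unfolding matrix_inv_def by (rule someI_ex)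
  then show "A ** matrix_inv A = mat 1" "matrix_inv A ** A = mat 1" by auto
qed

lemma minv_unique: assumes "(A::'a::field^'n^'n) ** X = mat 1" "X ** A = mat 1"
  shows "matrix_inv A = X"
proof -
  have "det A * det X = 1" using assms(1) by (metis det_I det_mul)
  then have d: "det A \<noteq> 0" by auto
  have "matrix_inv A = matrix_inv A ** (A ** X)" using assms by simp
  also have "\<dots> = (matrix_inv A ** A) ** X" by (simp add: matrix_mul_assoc)
  also have "\<dots> = X" using minv[OF d] by simp
  finally show ?thesis .
qed

lemma cL_gen: fixes w a b :: "'a::field" assumes "w^2+w+1=0" "w^3=1" "b*a=1"
  shows "m3 (w*(-2-3*w)) (-(w*a)) w (-(w*b)) (-w) 0 w 0 0 ** m3 1 0 0 (w^2*b) 1 0 w (-(w*a)) 1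
       = m3 1 0 0 (w^2*b) 1 0 w (-(w*a)) 1 ** m3 1 a w 0 1 (-b) 0 0 1"
  apply (simp add: m3_mult m3_eq_iff)
  apply (intro conjI disjI2)
  using assms by algebra+

lemma tor_gen: fixes s sq a aq :: "'a::field" assumes "s \<noteq> 0" "sq \<noteq> 0" "aq * a = - (s + sq)"
  shows "m3 s 0 0 0 (sq / s) 0 0 0 (1 / sq) =
    m3 0 0 1 0 (-1) 0 1 0 0 ** m3 1 (a / sq) (1 / sq) 0 1 (- (aq / s)) 0 0 1 ** m3 0 0 1 0 (-1) 0 1 0 0 **
    m3 1 a s 0 1 (- aq) 0 0 1 ** m3 0 0 1 0 (-1) 0 1 0 0 ** m3 1 (a / s) (1 / sq) 0 1 (- (aq / sq)) 0 0 1"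
  using assms
  apply (simp add: m3_mult m3_eq_iff field_simps)
  using assms by algebra

locale su3ctx =
  fixes q :: nat and A \<alpha> \<omega> :: "'a::{field,finite}"
  assumes fadd: "\<And>x y::'a. (x + y) ^ q = x ^ q + y ^ q"
    and finv: "\<And>x::'a. (x ^ q) ^ q = x"
    and qpos: "q > 0"
begin

lemma f0 [simp]: "(0::'a) ^ q = 0" using qpos by simp

lemma fneg [simp]: "(- x::'a) ^ q = - (x ^ q)"
proof -
  have "(x + - x) ^ q = x ^ q + (- x) ^ q" by (rule fadd)
  then show ?thesis by (simp add: eq_neg_iff_add_eq_0 add.commute)
qed

lemma fdiff [simp]: "(x - y::'a) ^ q = x ^ q - y ^ q"
  using fadd[of x "-y"] by simp

lemma fnat [simp]: "(of_nat n::'a) ^ q = of_nat n"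
  by (induction n) (simp_all add: fadd)

lemma fnum [simp]: "(numeral n::'a) ^ q = numeral n"
  using fnat[of "numeral n"] by simp

lemmas fsimps = fadd finv power_mult_distrib power_divide power_inverse

abbreviation G :: "('a^3^3) set" where "G \<equiv> SU3 q"

lemma conj_star_mult_m3: "conj_star q (m3 (a::'a) b c d e f g h i ** m3 a' b' c' d' e' f' g' h' i') =
   conj_star q (m3 a' b' c' d' e' f' g' h' i') ** conj_star q (m3 a b c d e f g h i)"
  by (simp add: m3_mult conj_star_m3 fadd power_mult_distrib m3_eq_iff mult.commute)

lemma conj_star_mult: "conj_star q (X ** Y) = conj_star q Y ** conj_star q (X::'a^3^3)"
proof -
  have "conj_star q (m3 (X$1$1) (X$1$2) (X$1$3) (X$2$1) (X$2$2) (X$2$3) (X$3$1) (X$3$2) (X$3$3) ** m3 (Y$1$1) (Y$1$2) (Y$1$3) (Y$2$1) (Y$2$2) (Y$2$3) (Y$3$1) (Y$3$2) (Y$3$3)) = conj_star q (m3 (Y$1$1) (Y$1$2) (Y$1$3) (Y$2$1) (Y$2$2) (Y$2$3) (Y$3$1) (Y$3$2) (Y$3$3)) ** conj_star q (m3 (X$1$1) (X$1$2) (X$1$3) (X$2$1) (X$2$2) (X$2$3) (X$3$1) (X$3$2) (X$3$3))"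
    by (rule conj_star_mult_m3)
  then show ?thesis by (simp only: m3_eta[symmetric])
qed

lemma conj_star_I: "conj_star q (mat 1::'a^3^3) = mat 1"
  by (simp add: mat1_m3 conj_star_m3)

lemma G_I: "mat 1 \<in> G"
  unfolding SU3_def by (simp add: conj_star_I)

lemma G_det: "X \<in> G \<Longrightarrow> det X = 1" unfolding SU3_def by simp

lemma G_mult: assumes "X \<in> G" "Y \<in> G" shows "X ** Y \<in> G"
proof -
  have "conj_star q (X ** Y) ** Jmat ** (X ** Y) = conj_star q Y ** (conj_star q X ** Jmat ** X) ** Y"
    by (simp add: conj_star_mult matrix_mul_assoc)
  also have "\<dots> = Jmat" using assms unfolding SU3_def by simp
  finally show ?thesis using assms unfolding SU3_def by (simp add: det_mul)
qed

lemma G_minv: assumes "X \<in> G" shows "X ** matrix_inv X = mat 1" "matrix_inv X ** X = mat 1"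
  using minv[of X] G_det[OF assms] by auto

lemma G_inv: assumes "X \<in> G" shows "matrix_inv X \<in> G"
proof -
  let ?Y = "matrix_inv X"
  have d: "det X * det ?Y = 1" using G_minv(1)[OF assms] by (metis det_I det_mul)
  then have dY: "det ?Y = 1" using G_det[OF assms] by simp
  have cs: "conj_star q ?Y ** conj_star q X = mat 1"
    using conj_star_mult[of X ?Y] G_minv(1)[OF assms] conj_star_I by simp
  have "conj_star q ?Y ** Jmat ** ?Y = conj_star q ?Y ** (conj_star q X ** Jmat ** X) ** ?Y"
    using assms unfolding SU3_def by simp
  also have "\<dots> = (conj_star q ?Y ** conj_star q X) ** Jmat ** (X ** ?Y)"
    by (simp add: matrix_mul_assoc)
  also have "\<dots> = Jmat" using cs G_minv(1)[OF assms] by simp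
  finally show ?thesis using dY unfolding SU3_def by simp
qed

lemma G_minv_mult: assumes "X \<in> G" "Y \<in> G"
  shows "matrix_inv (X ** Y) = matrix_inv Y ** matrix_inv X"
proof (rule minv_unique)
  show "X ** Y ** (matrix_inv Y ** matrix_inv X) = mat 1"
  proof -
    have "X ** Y ** (matrix_inv Y ** matrix_inv X) = X ** (Y ** matrix_inv Y) ** matrix_inv X"
      by (simp add: matrix_mul_assoc)
    then show ?thesis using G_minv(1)[OF assms(1)] G_minv(1)[OF assms(2)] by simp
  qed
  show "matrix_inv Y ** matrix_inv X ** (X ** Y) = mat 1"
  proof -
    have "matrix_inv Y ** matrix_inv X ** (X ** Y) = matrix_inv Y ** (matrix_inv X ** X) ** Y"
      by (simp add: matrix_mul_assoc)
    then show ?thesis using G_minv(2)[OF assms(1)] G_minv(2)[OF assms(2)] by simp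
  qed
qed

lemma minv_I: "matrix_inv (mat 1 :: 'a^3^3) = mat 1"
  by (rule minv_unique) simp_all

lemma G_minv_minv: "X \<in> G \<Longrightarrow> matrix_inv (matrix_inv X) = X"
  by (rule minv_unique) (simp_all add: G_minv)

definition uu :: "'a \<Rightarrow> 'a \<Rightarrow> 'a^3^3" where "uu a b = m3 1 a b 0 1 (-(a^q)) 0 0 1"
definition WW :: "'a^3^3" where "WW = m3 0 0 1 0 (-1) 0 1 0 0"
definition tm :: "'a \<Rightarrow> 'a^3^3" where "tm s = m3 s 0 0 0 (s^q / s) 0 0 0 (1 / s^q)"

lemma uu_mult: "uu a b ** uu c d = uu (a + c) (b + d - a * c ^ q)"
  unfolding uu_def by (simp add: m3_mult m3_eq_iff fadd algebra_simps)

lemma uu_G: assumes "b + b ^ q + a ^ q * a = 0" shows "uu a b \<in> G"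
  unfolding uu_def su3_m3_iff using assms by (simp add: finv algebra_simps)

lemma uu_inv: assumes "b + b ^ q + a ^ q * a = 0" shows "matrix_inv (uu a b) = uu (- a) (b ^ q)"
proof (rule minv_unique)
  show "uu a b ** uu (- a) (b ^ q) = mat 1" using assms unfolding uu_mult
    by (simp add: mat1_m3 uu_def m3_eq_iff algebra_simps)
  show "uu (- a) (b ^ q) ** uu a b = mat 1" using assms unfolding uu_mult
    by (simp add: mat1_m3 uu_def m3_eq_iff algebra_simps finv)
qed

lemma WW_G: "WW \<in> G" unfolding WW_def su3_m3_iff by simp

lemma WW_WW: "WW ** WW = mat 1" unfolding WW_def mat1_m3 by (simp add: m3_mult)

lemma WW_inv: "matrix_inv WW = WW" by (rule minv_unique) (simp_all add: WW_WW)

lemma tm_G: assumes "s \<noteq> 0" shows "tm s \<in> G"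
proof -
  have "s ^ q \<noteq> 0" using assms by simp
  then show ?thesis unfolding tm_def su3_m3_iff using assms by (simp add: finv power_divide field_simps)
qed

definition cj :: "'a^3^3 \<Rightarrow> 'a^3^3 \<Rightarrow> 'a^3^3" where "cj g x = g ** x ** matrix_inv g"

lemma cj_mult: "g \<in> G \<Longrightarrow> h \<in> G \<Longrightarrow> cj (g ** h) x = cj g (cj h x)"
  unfolding cj_def by (simp add: G_minv_mult matrix_mul_assoc)

lemma cj_prod: assumes "g \<in> G" shows "cj g x ** cj g y = cj g (x ** y)"
proof -
  have "cj g x ** cj g y = g ** x ** (matrix_inv g ** g) ** y ** matrix_inv g"
    unfolding cj_def by (simp add: matrix_mul_assoc)
  also have "\<dots> = cj g (x ** y)" unfolding cj_def using G_minv(2)[OF assms] by (simp add: matrix_mul_assoc)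
  finally show ?thesis .
qed

lemma cj_back: assumes "g \<in> G" shows "matrix_inv g ** cj g x ** g = x"
proof -
  have "matrix_inv g ** cj g x ** g = (matrix_inv g ** g) ** x ** (matrix_inv g ** g)"
    unfolding cj_def by (simp add: matrix_mul_assoc)
  then show ?thesis using G_minv(2)[OF assms] by simp
qed


lemma cj_inj: assumes "g \<in> G" "cj g x = cj g y" shows "x = y"
proof -
  have "x = matrix_inv g ** cj g x ** g" by (rule cj_back[OF assms(1), symmetric])
  also have "\<dots> = matrix_inv g ** cj g y ** g" by (simp only: assms(2))
  also have "\<dots> = y" by (rule cj_back[OF assms(1)])
  finally show ?thesis .
qed

lemma cj_I [simp]: "cj (mat 1) x = x" unfolding cj_def by (simp add: minv_I)

lemma cj_G: "g \<in> G \<Longrightarrow> x \<in> G \<Longrightarrow> cj g x \<in> G"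
  unfolding cj_def by (simp add: G_mult G_inv)

lemma cj_eqI: assumes "g \<in> G" "y ** g = g ** x" shows "y = cj g x"
proof -
  have "cj g x = y ** g ** matrix_inv g" unfolding cj_def using assms(2) by simp
  also have "\<dots> = y" using G_minv(1)[OF assms(1)] by (simp add: matrix_mul_assoc[symmetric])
  finally show ?thesis by simp
qed

end

locale su3graph = su3ctx q A \<alpha> \<omega> for q and A \<alpha> \<omega> :: "'a::{field,finite}" +
  fixes x0 :: "'a^3^3"
  assumes x0G: "x0 \<in> G"
begin

definition CC where "CC = conj_class G x0"
definition EE where "EE = killing_graph G CC"
definition RR where "RR = EE\<^sup>*"
definition PP where "PP g \<longleftrightarrow> (x0, cj g x0) \<in> RR"

lemma CC_iff: "y \<in> CC \<longleftrightarrow> (\<exists>g\<in>G. y = cj g x0)"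
  unfolding CC_def conj_class_def cj_def by auto

lemma CC_G: assumes "y \<in> CC" shows "y \<in> G"
proof -
  obtain g where "g \<in> G" "y = cj g x0" using assms CC_iff by blast
  then show ?thesis using cj_G x0G by simp
qed

lemma CC_conj: assumes "y \<in> CC" "h \<in> G" shows "cj h y \<in> CC"
proof -
  obtain g where g: "g \<in> G" "y = cj g x0" using assms CC_iff by blast
  have "cj h y = cj (h ** g) x0" using g assms(2) by (simp add: cj_mult)
  moreover have "h ** g \<in> G" using g assms(2) G_mult by blast
  ultimately show ?thesis using CC_iff by blast
qed

lemma x0_CC: "x0 \<in> CC" using CC_iff G_I by force

lemma EE_iff: "(a, b) \<in> EE \<longleftrightarrow> a \<in> CC \<and> b \<in> CC \<and> a \<noteq> b \<and>
   (\<exists>c\<in>CC. c ** (a ** b) = (a ** b) ** c)"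
  unfolding EE_def killing_graph_def centralizer_in_def using CC_G by blast

lemma EE_conj: assumes "(a, b) \<in> EE" "h \<in> G" shows "(cj h a, cj h b) \<in> EE"
proof -
  obtain c where c: "c \<in> CC" "c ** (a ** b) = (a ** b) ** c" "a \<in> CC" "b \<in> CC" "a \<noteq> b"
    using assms(1) EE_iff by blast
  have "cj h c ** (cj h a ** cj h b) = (cj h a ** cj h b) ** cj h c"
    using c(2) assms(2) by (simp add: cj_prod)
  moreover have "cj h a \<noteq> cj h b" using cj_inj assms(2) c(5) by blast
  ultimately show ?thesis using c assms(2) CC_conj EE_iff by blast
qed

lemma EE_sym: assumes "(a, b) \<in> EE" shows "(b, a) \<in> EE"
proof -
  obtain c where c: "c \<in> CC" "c ** (a ** b) = (a ** b) ** c" "a \<in> CC" "b \<in> CC" "a \<noteq> b"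
    using assms(1) EE_iff by blast
  have aG: "a \<in> G" using c(3) CC_G by blast
  let ?h = "matrix_inv a"
  have hG: "?h \<in> G" using G_inv aG by blast
  have ba: "b ** a = cj ?h (a ** b)"
  proof -
    have "cj ?h (a ** b) = (?h ** a) ** b ** a" unfolding cj_def using G_minv_minv[OF aG]
      by (simp add: matrix_mul_assoc)
    then show ?thesis using G_minv(2)[OF aG] by simp
  qed
  have "cj ?h c ** (b ** a) = (b ** a) ** cj ?h c"
    using c(2) hG by (simp add: ba cj_prod)
  then show ?thesis using c CC_conj[OF c(1) hG] EE_iff by blast
qed

lemma RR_conj: assumes "(a, b) \<in> RR" "h \<in> G" shows "(cj h a, cj h b) \<in> RR"
  using assms(1) unfolding RR_def
proof (induction rule: rtrancl_induct)
  case base then show ?case by simp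
next
  case (step y z) then show ?case using EE_conj[OF _ assms(2)]
    by (meson rtrancl.rtrancl_into_rtrancl)
qed

lemma RR_sym: assumes "(a, b) \<in> RR" shows "(b, a) \<in> RR"
  using assms unfolding RR_def
proof (induction rule: rtrancl_induct)
  case base then show ?case by simp
next
  case (step y z) then show ?case using EE_sym
    by (meson converse_rtrancl_into_rtrancl)
qed

lemma PP_mult: assumes "g \<in> G" "h \<in> G" "PP g" "PP h" shows "PP (g ** h)"
proof -
  have "(cj g x0, cj g (cj h x0)) \<in> RR" using RR_conj assms(2,4) assms(1) PP_def by blast
  then show ?thesis using assms unfolding PP_def RR_def by (simp add: cj_mult)
qed

lemma PP_edge: assumes "(x0, y) \<in> EE" "y = cj g x0" shows "PP g"
  using assms unfolding PP_def RR_def by auto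

lemma irreducible_if: assumes "\<And>g. g \<in> G \<Longrightarrow> PP g"
  shows "killing_irreducible G CC"
  unfolding killing_irreducible_def
proof (intro conjI ballI)
  show "CC \<noteq> {}" using x0_CC by blast
  fix a b assume "a \<in> CC" "b \<in> CC"
  then obtain g h where gh: "g \<in> G" "h \<in> G" "a = cj g x0" "b = cj h x0" using CC_iff by blast
  have "(a, x0) \<in> RR" using assms[OF gh(1)] RR_sym gh(3) PP_def by blast
  moreover have "(x0, b) \<in> RR" using assms[OF gh(2)] gh(4) PP_def by blast
  ultimately show "(a, b) \<in> (killing_graph G CC)\<^sup>*" unfolding RR_def EE_def by simp
qed

end

locale su3main = su3ctx q A \<alpha> \<omega> for q and A \<alpha> \<omega> :: "'a::{field,finite}" +
  assumes A_norm: "A ^ q * A = 1"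
    and alpha: "\<alpha> + \<alpha> ^ q + 1 = 0"
    and om: "\<omega> ^ 2 + \<omega> + 1 = 0"
    and om_q: "\<omega> ^ q = \<omega> ^ 2"
    and nsurj: "\<And>s::'a. s \<noteq> 0 \<Longrightarrow> \<exists>a::'a. a ^ q * a = - (s + s ^ q)"

sublocale su3main \<subseteq> su3graph q A \<alpha> \<omega> "uu A \<alpha>"
proof
  show "uu A \<alpha> \<in> SU3 q" using uu_G alpha A_norm by (simp add: add.assoc)
qed

context su3main
begin

lemma cj_uu: assumes "b + b ^ q + a ^ q * a = 0"
  shows "cj (uu a b) (uu A \<beta>) = uu A (\<beta> + A * a ^ q - a * A ^ q)"
  unfolding cj_def uu_inv[OF assms] uu_mult
  using assms by (simp add: uu_def m3_eq_iff algebra_simps)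

lemma uu_comm_A: "uu A b ** uu A c = uu A c ** uu A b"
  by (simp add: uu_mult add.commute)

lemma PU: assumes "b + b ^ q + a ^ q * a = 0" shows "PP (uu a b)"
proof (cases "cj (uu a b) (uu A \<alpha>) = uu A \<alpha>")
  case True then show ?thesis unfolding PP_def RR_def by simp
next
  case False
  define y where "y = cj (uu a b) (uu A \<alpha>)"
  have y: "y = uu A (\<alpha> + A * a ^ q - a * A ^ q)" using cj_uu[OF assms] y_def by simp
  have yC: "y \<in> CC" using CC_iff uu_G[OF assms] y_def by blast
  have "uu A \<alpha> ** (uu A \<alpha> ** y) = (uu A \<alpha> ** y) ** uu A \<alpha>"
    using y uu_comm_A by (metis matrix_mul_assoc)
  then have "(uu A \<alpha>, y) \<in> EE" unfolding EE_iff
    using x0_CC yC False y_def by (intro conjI bexI[of _ "uu A \<alpha>"]) simp_all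
  then show ?thesis using PP_edge y_def by blast
qed


lemma A_nz: "A \<noteq> 0" using A_norm by auto

lemma valid_inv: assumes "b + b ^ q + a ^ q * (a::'a) = 0" shows "b ^ q + (b ^ q) ^ q + (- a) ^ q * (- a) = 0"
  using assms by (simp add: finv algebra_simps)

lemma lin1: assumes "x + y + 1 = (0::'a)" shows "y = - 1 - x"
proof -
  have "y = (x + y + 1) - 1 - x" by (simp add: algebra_simps)
  then show ?thesis using assms by simp
qed

lemma alpha_q: "\<alpha> ^ q = - 1 - \<alpha>" using lin1[OF alpha] .

lemma reach: assumes "\<beta> + \<beta> ^ q + 1 = 0"
  shows "\<exists>a b. b + b ^ q + a ^ q * a = 0 \<and> cj (uu a b) (uu A \<alpha>) = uu A \<beta>"
proof -
  define \<delta> where "\<delta> = \<beta> - \<alpha>"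
  have bq: "\<beta> ^ q = - 1 - \<beta>" using lin1[OF assms] .
  have dq: "\<delta> ^ q = - \<delta>" unfolding \<delta>_def by (simp add: bq alpha_q)
  define c where "c = \<alpha> * \<delta> * A"
  define d where "d = \<alpha> * (c ^ q * c)"
  have v: "d + d ^ q + c ^ q * c = 0"
  proof -
    have "d + d ^ q + c ^ q * c = (\<alpha> + \<alpha> ^ q + 1) * (c ^ q * c)"
      unfolding d_def by (simp add: power_mult_distrib finv algebra_simps)
    then show ?thesis using alpha by simp
  qed
  have "\<alpha> + A * c ^ q - c * A ^ q = \<beta>"
  proof -
    have "\<alpha> + A * c ^ q - c * A ^ q = \<alpha> - (\<alpha> ^ q + \<alpha>) * \<delta> * (A ^ q * A)"
      unfolding c_def by (simp add: power_mult_distrib dq algebra_simps)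
    also have "\<dots> = \<beta>" unfolding \<delta>_def by (simp add: A_norm alpha_q)
    finally show ?thesis .
  qed
  then show ?thesis using cj_uu[OF v, of \<alpha>] v by blast
qed


lemma om3: "\<omega> ^ 3 = 1"
proof -
  have "\<omega> ^ 3 - 1 = (\<omega> - 1) * (\<omega> ^ 2 + \<omega> + 1)" by (simp add: algebra_simps power2_eq_square power3_eq_cube)
  then show ?thesis using om by simp
qed

lemma om_valid: "\<omega> + \<omega> ^ q + 1 = 0" using om om_q by (simp add: algebra_simps)

lemma PW: "PP WW"
proof -
  define \<beta> where "\<beta> = - 2 - 3 * \<omega>"
  have bv: "\<beta> + \<beta> ^ q + 1 = 0"
  proof -
    have "\<beta> + \<beta> ^ q + 1 = - 3 * (\<omega> ^ 2 + \<omega> + 1)" unfolding \<beta>_def by (simp add: om_q algebra_simps)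
    then show ?thesis using om by simp
  qed
  obtain a1 b1 where v1: "b1 + b1 ^ q + a1 ^ q * a1 = 0" and c1: "cj (uu a1 b1) (uu A \<alpha>) = uu A \<beta>"
    using reach[OF bv] by blast
  obtain a2 b2 where v2: "b2 + b2 ^ q + a2 ^ q * a2 = 0" and c2: "cj (uu a2 b2) (uu A \<alpha>) = uu A \<omega>"
    using reach[OF om_valid] by blast
  define x1 where "x1 = uu A \<beta>"
  define y where "y = cj WW x1"
  define Lm where "Lm = m3 1 0 0 (\<omega> ^ 2 * A ^ q) 1 0 \<omega> (- (\<omega> * A)) 1"
  define cc where "cc = m3 (\<omega> * \<beta>) (- (\<omega> * A)) \<omega> (- (\<omega> * A ^ q)) (- \<omega>) 0 \<omega> 0 0"
  have Lm_eq: "Lm = WW ** uu (\<omega> * A) \<omega> ** WW"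
    unfolding Lm_def WW_def uu_def by (simp add: m3_mult m3_eq_iff power_mult_distrib om_q)
  have vL: "\<omega> + \<omega> ^ q + (\<omega> * A) ^ q * (\<omega> * A) = 0"
  proof -
    have e: "(\<omega> * A) ^ q * (\<omega> * A) = \<omega> ^ 3 * (A ^ q * A)"
      by (simp add: power_mult_distrib om_q algebra_simps power2_eq_square power3_eq_cube)
    have "\<omega> + \<omega> ^ q + (\<omega> * A) ^ q * (\<omega> * A) = \<omega> ^ 2 + \<omega> + 1"
      unfolding e om3 A_norm om_q by (simp add: add.commute add.left_commute)
    then show ?thesis using om by simp
  qed
  have LmG: "Lm \<in> G" unfolding Lm_eq using WW_G uu_G[OF vL] by (simp add: G_mult)
  have y_eq: "y = m3 1 0 0 (A ^ q) 1 0 \<beta> (- A) 1"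
    unfolding y_def cj_def WW_inv unfolding x1_def WW_def uu_def by (simp add: m3_mult)
  have cL: "cc ** Lm = Lm ** uu A \<omega>"
    unfolding cc_def Lm_def uu_def
    unfolding \<beta>_def using cL_gen[OF om om3 A_norm] .
  have ccC: "cc \<in> CC"
  proof -
    have "cc = cj Lm (uu A \<omega>)" using cj_eqI[OF LmG cL] .
    also have "\<dots> = cj (Lm ** uu a2 b2) (uu A \<alpha>)" using c2 LmG uu_G[OF v2] by (simp add: cj_mult)
    finally show ?thesis using CC_iff LmG uu_G[OF v2] G_mult by blast
  qed
  have x1C: "x1 \<in> CC" using CC_iff uu_G[OF v1] c1 x1_def by metis
  have yC: "y \<in> CC" unfolding y_def using CC_conj[OF x1C WW_G] .
  have neq: "x1 \<noteq> y"
  proof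
    assume "x1 = y"
    then have "x1 $ 1 $ 2 = y $ 1 $ 2" by simp
    then show False using A_nz unfolding x1_def y_eq uu_def by simp
  qed
  have comm: "cc ** (x1 ** y) = (x1 ** y) ** cc"
    unfolding cc_def x1_def y_eq uu_def by (simp add: m3_mult m3_eq_iff algebra_simps)
  have E: "(x1, y) \<in> EE" unfolding EE_iff
    using x1C yC neq comm ccC by blast
  have "PP (uu a1 b1)" using PU[OF v1] .
  then have "(uu A \<alpha>, x1) \<in> RR" unfolding PP_def x1_def c1 .
  then have "(uu A \<alpha>, y) \<in> RR" using E unfolding RR_def by simp
  moreover have "y = cj (WW ** uu a1 b1) (uu A \<alpha>)"
    unfolding y_def x1_def using c1 WW_G uu_G[OF v1] by (simp add: cj_mult)
  ultimately have P1: "PP (WW ** uu a1 b1)" unfolding PP_def by simp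
  have P2: "PP (uu (- a1) (b1 ^ q))" using PU[OF valid_inv[OF v1]] .
  have "PP ((WW ** uu a1 b1) ** uu (- a1) (b1 ^ q))"
    using PP_mult[OF _ _ P1 P2] WW_G uu_G[OF v1] uu_G[OF valid_inv[OF v1]] G_mult by blast
  moreover have "(WW ** uu a1 b1) ** uu (- a1) (b1 ^ q) = WW"
    using G_minv(1)[OF uu_G[OF v1]] uu_inv[OF v1] by (simp add: matrix_mul_assoc[symmetric])
  ultimately show ?thesis by simp
qed


lemma PT: assumes "(s::'a) \<noteq> 0" shows "PP (tm s)"
proof -
  obtain a where a: "a ^ q * a = - (s + s ^ q)" using nsurj[OF assms] by blast
  have sq: "s ^ q \<noteq> 0" using assms by simp
  define U1 where "U1 = uu (a / s ^ q) (1 / s ^ q)"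
  define U2 where "U2 = uu a s"
  define U3 where "U3 = uu (a / s) (1 / s ^ q)"
  have v1: "1 / s ^ q + (1 / s ^ q) ^ q + (a / s ^ q) ^ q * (a / s ^ q) = 0"
  proof -
    have "1 / s ^ q + (1 / s ^ q) ^ q + (a / s ^ q) ^ q * (a / s ^ q) = (s + s ^ q + a ^ q * a) / (s * s ^ q)"
      using assms sq by (simp add: power_divide finv field_simps)
    then show ?thesis using a by simp
  qed
  have v2: "s + s ^ q + a ^ q * a = 0" using a by simp
  have v3: "1 / s ^ q + (1 / s ^ q) ^ q + (a / s) ^ q * (a / s) = 0"
  proof -
    have "1 / s ^ q + (1 / s ^ q) ^ q + (a / s) ^ q * (a / s) = (s + s ^ q + a ^ q * a) / (s * s ^ q)"
      using assms sq by (simp add: power_divide finv field_simps)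
    then show ?thesis using a by simp
  qed
  have G1: "U1 \<in> G" "U2 \<in> G" "U3 \<in> G" unfolding U1_def U2_def U3_def using uu_G v1 v2 v3 by auto
  have P1: "PP U1" "PP U2" "PP U3" unfolding U1_def U2_def U3_def using PU v1 v2 v3 by auto
  have eq: "tm s = WW ** U1 ** WW ** U2 ** WW ** U3"
    unfolding tm_def WW_def U1_def U2_def U3_def uu_def
    using tor_gen[OF assms sq a] by (simp add: power_divide finv)
  show ?thesis unfolding eq
    using PP_mult G_mult G1 P1 WW_G PW by metis
qed

lemma UT: assumes "m3 1 x y 0 1 z 0 0 1 \<in> G" shows "PP (m3 1 x y 0 1 z 0 0 1)"
proof -
  have z: "z = - (x ^ q)" using assms unfolding su3_m3_iff by (simp add: eq_neg_iff_add_eq_0)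
  have v: "y + y ^ q + x ^ q * x = 0" using assms z unfolding su3_m3_iff by (simp add: finv algebra_simps)
  show ?thesis using PU[OF v] z unfolding uu_def by simp
qed


lemma tm_inv: assumes "(a::'a) \<noteq> 0" shows "tm a ** tm (1 / a) = mat 1"
proof -
  have "a ^ q \<noteq> 0" using assms by simp
  then show ?thesis unfolding tm_def mat1_m3 using assms by (simp add: m3_mult m3_eq_iff power_divide field_simps)
qed

lemma PB: assumes MG: "M \<in> G" and M31: "M $ 3 $ 1 = 0" shows "PP M"
proof -
  obtain a b c d e f h i where M: "M = m3 a b c d e f 0 h i"
    using m3_eta[of M] M31 by metis
  have eqs: "a*e*i + b*f*0 + c*d*h - a*f*h - b*d*i - c*e*0 = 1"
    "0^q*a + d^q*d + a^q*0 = 0" "0^q*b + d^q*e + a^q*h = 0" "0^q*c + d^q*f + a^q*i = 1"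
    using MG unfolding M su3_m3_iff by simp_all
  have d: "d = 0" using eqs(2) by auto
  have ei: "a * (e * i - f * h) = 1" using eqs(1) d by (simp add: algebra_simps)
  then have a0: "a \<noteq> 0" by auto
  then have aq0: "a ^ q \<noteq> 0" by simp
  have h: "h = 0" using eqs(3) d aq0 a0 by auto
  have i: "i = 1 / a ^ q" using eqs(4) d aq0 by (simp add: field_simps)
  have e: "e = a ^ q / a" using ei h i a0 aq0 by (simp add: field_simps)
  define N where "N = tm (1 / a) ** M"
  have NG: "N \<in> G" unfolding N_def using G_mult tm_G a0 MG by simp
  have N: "N = m3 1 (b / a) (c / a) 0 1 (a * f / a ^ q) 0 0 1"
    unfolding N_def M tm_def d h i e using a0 aq0
    by (simp add: m3_mult m3_eq_iff power_divide field_simps)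
  have "PP N" using UT NG unfolding N by simp
  moreover have "M = tm a ** N" unfolding N_def
    using tm_inv[OF a0] by (simp add: matrix_mul_assoc)
  ultimately show ?thesis using PP_mult PT[OF a0] tm_G[OF a0] NG by simp
qed

lemma PAll: assumes MG: "M \<in> G" shows "PP M"
proof (cases "M $ 3 $ 1 = 0")
  case True then show ?thesis using PB MG by blast
next
  case False
  obtain a b c d e f g h i where M: "M = m3 a b c d e f g h i"
    using m3_eta[of M] by metis
  have g: "g \<noteq> 0" using False M by simp
  then have gq: "g ^ q \<noteq> 0" by simp
  have e11: "g^q*a + d^q*d + a^q*g = 0" using MG unfolding M su3_m3_iff by simp
  define a1 where "a1 = - ((d / g) ^ q)"
  define b1 where "b1 = a / g"
  have v: "b1 + b1 ^ q + a1 ^ q * a1 = 0"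
  proof -
    have "b1 + b1 ^ q + a1 ^ q * a1 = (g^q*a + d^q*d + a^q*g) / (g * g ^ q)"
      unfolding a1_def b1_def using g gq by (simp add: power_divide finv field_simps)
    then show ?thesis using e11 by simp
  qed
  define hh where "hh = WW ** uu (- a1) (b1 ^ q) ** M"
  have hhG: "hh \<in> G" unfolding hh_def using G_mult WW_G uu_G[OF valid_inv[OF v]] MG by simp
  have "hh $ 3 $ 1 = (g^q*a + d^q*d + a^q*g) / g ^ q"
    unfolding hh_def M WW_def uu_def a1_def b1_def using g gq
    by (simp add: m3_mult power_divide finv field_simps)
  then have "hh $ 3 $ 1 = 0" using e11 by simp
  then have Ph: "PP hh" using PB hhG by blast
  have "M = uu a1 b1 ** WW ** hh"
  proof -
    have "uu a1 b1 ** WW ** hh = uu a1 b1 ** (WW ** WW) ** uu (- a1) (b1 ^ q) ** M"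
      unfolding hh_def by (simp add: matrix_mul_assoc)
    also have "\<dots> = (uu a1 b1 ** uu (- a1) (b1 ^ q)) ** M" by (simp add: WW_WW matrix_mul_assoc)
    also have "\<dots> = M" using G_minv(1)[OF uu_G[OF v]] uu_inv[OF v] by simp
    finally show ?thesis by simp
  qed
  then show ?thesis using PP_mult[OF _ _ PP_mult[OF _ _ PU[OF v] PW]] uu_G[OF v] WW_G hhG Ph G_mult by metis
qed

lemma main_irred: "killing_irreducible G CC"
  using irreducible_if PAll by blast

end

lemma order_lemma:
  fixes \<xi> :: "'a::{field,finite}"
  assumes gen: "\<forall>x::'a. x \<noteq> 0 \<longrightarrow> (\<exists>n::nat. x = \<xi> ^ n)"
    and d: "0 < d" "\<xi> ^ d = 1"
  shows "CARD('a) - 1 \<le> d"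
proof -
  have sub: "UNIV - {0} \<subseteq> (\<lambda>n. \<xi> ^ n) ` {..<d}"
  proof
    fix x :: 'a assume "x \<in> UNIV - {0}"
    then obtain n where n: "x = \<xi> ^ n" using gen by auto
    have "\<xi> ^ n = \<xi> ^ (d * (n div d) + n mod d)" by simp
    also have "\<dots> = (\<xi> ^ d) ^ (n div d) * \<xi> ^ (n mod d)" by (simp only: power_add power_mult)
    finally have "\<xi> ^ n = (\<xi> ^ d) ^ (n div d) * \<xi> ^ (n mod d)" .
    then have "x = \<xi> ^ (n mod d)" using n d by simp
    then show "x \<in> (\<lambda>n. \<xi> ^ n) ` {..<d}" using d(1) by auto
  qed
  have "card (UNIV - {0::'a}) \<le> card ((\<lambda>n. \<xi> ^ n) ` {..<d})"
    by (rule card_mono[OF _ sub]) simp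
  also have "\<dots> \<le> d" using card_image_le[of "{..<d}" "\<lambda>n. \<xi> ^ n"] by simp
  finally show ?thesis by (simp add: card_Diff_singleton)
qed

theorem proposition4p12:
  fixes q :: nat and \<xi> \<alpha> :: "'a::{field,finite}" and l :: nat
  assumes "prime_power q" and "q \<noteq> 2" and "q mod 3 = 2"
    and "CARD('a) = q ^ 2"
    and "\<forall>x::'a. x \<noteq> 0 \<longrightarrow> (\<exists>n::nat. x = \<xi> ^ n)"
    and "\<alpha> \<noteq> 0" and "\<alpha> + \<alpha> ^ q + 1 = 0"
    and "l \<le> 2"
  shows "killing_irreducible (SU3 q) (C3_class q \<xi> \<alpha> l)"
proof -
  note pp = assms(1) and qm = assms(3) and card = assms(4) and gen = assms(5) and al = assms(7)
  have fadd: "\<And>x y::'a. (x + y) ^ q = x ^ q + y ^ q" using frob_facts(1)[OF pp card] by blast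
  have finv: "\<And>x::'a. (x ^ q) ^ q = x" using frob_facts(2)[OF pp card] by blast
  obtain p k where pk: "prime p" "k > 0" "q = p ^ k" using pp unfolding prime_power_def by blast
  have q2: "q \<ge> 2"
  proof -
    have "p ^ 1 \<le> p ^ k" using power_increasing[of 1 k p] pk(2) prime_ge_1_nat[OF pk(1)] by simp
    then show ?thesis using prime_ge_2_nat[OF pk(1)] pk(3) by simp
  qed
  have qpos: "q > 0" using q2 by simp
  define N where "N = q ^ 2 - 1"
  have N_eq: "N = (q - 1) * (q + 1)" unfolding N_def using q2
    by (cases q) (simp_all add: power2_eq_square algebra_simps)
  have Npos: "N > 0" unfolding N_eq using q2 by simp
  have ord: "\<And>d. 0 < d \<Longrightarrow> \<xi> ^ d = 1 \<Longrightarrow> N \<le> d"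
    using order_lemma[OF gen] card N_def by simp
  have xi0: "\<xi> \<noteq> 0"
  proof
    assume z: "\<xi> = 0"
    have "UNIV \<subseteq> {0, 1::'a}"
    proof
      fix x :: 'a
      show "x \<in> {0, 1}"
      proof (cases "x = 0")
        case False
        then obtain n where "x = \<xi> ^ n" using gen by blast
        then show ?thesis using z by (cases n) auto
      qed simp
    qed
    then have "CARD('a) \<le> card {0, 1::'a}" by (rule card_mono[rotated]) simp
    then have c2: "CARD('a) \<le> 2" by simp
    have "(2::nat) ^ 2 \<le> q ^ 2" using power_mono[OF q2, of 2] by simp
    then show False using card c2 by simp
  qed
  have xiN: "\<xi> ^ N = 1"
  proof -
    have "\<xi> ^ (q ^ 2) = \<xi>" using ff_power_card[of \<xi>] card by simp
    moreover have "\<xi> ^ (q ^ 2) = \<xi> * \<xi> ^ N" unfolding N_def using q2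
      by (simp add: power_Suc[symmetric])
    ultimately show ?thesis using xi0 by simp
  qed
  define A where "A = \<xi> ^ (l * (q - 1))"
  have A_norm: "A ^ q * A = 1"
  proof -
    have "A ^ q * A = \<xi> ^ (l * (q - 1) * q + l * (q - 1))" unfolding A_def
      by (simp only: power_add power_mult)
    also have "l * (q - 1) * q + l * (q - 1) = l * N"
    proof -
      have "\<And>r. l * r * q + l * r = l * (r * (q + 1))" by (simp add: algebra_simps)
      then show ?thesis unfolding N_eq by blast
    qed
    finally have "A ^ q * A = \<xi> ^ (N * l)" by (simp add: mult.commute)
    then show ?thesis using xiN by (simp add: power_mult)
  qed
  obtain m where qm3: "q = 3 * m + 2" using qm by (metis mod_div_mult_eq add.commute mult.commute)
  have N3: "N = 3 * (3 * m * m + 4 * m + 1)" unfolding N_def qm3 by (simp add: power2_eq_square algebra_simps)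
  define \<omega> where "\<omega> = \<xi> ^ (3 * m * m + 4 * m + 1)"
  have om3: "\<omega> ^ 3 = 1"
  proof -
    have "\<omega> ^ 3 = \<xi> ^ ((3 * m * m + 4 * m + 1) * 3)" unfolding \<omega>_def by (simp only: power_mult)
    also have "(3 * m * m + 4 * m + 1) * 3 = N" using N3 by simp
    finally show ?thesis using xiN by simp
  qed
  have om1: "\<omega> \<noteq> 1"
  proof
    assume "\<omega> = 1"
    then have "N \<le> 3 * m * m + 4 * m + 1" using ord[of "3 * m * m + 4 * m + 1"] unfolding \<omega>_def by simp
    then show False using N3 by simp
  qed
  have om: "\<omega> ^ 2 + \<omega> + 1 = 0"
  proof -
    have "(\<omega> - 1) * (\<omega> ^ 2 + \<omega> + 1) = \<omega> ^ 3 - 1" by (simp add: algebra_simps power2_eq_square power3_eq_cube)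
    then show ?thesis using om3 om1 by simp
  qed
  have om_q: "\<omega> ^ q = \<omega> ^ 2" unfolding qm3 using om3 by (simp add: power_add power_mult power2_eq_square)
  have nsurj: "\<And>s::'a. s \<noteq> 0 \<Longrightarrow> \<exists>a::'a. a ^ q * a = - (s + s ^ q)"
  proof -
    fix s :: 'a assume "s \<noteq> 0"
    define c where "c = - (s + s ^ q)"
    show "\<exists>a::'a. a ^ q * a = - (s + s ^ q)"
    proof (cases "c = 0")
      case True then show ?thesis using qpos c_def by (intro exI[of _ 0]) simp
    next
      case False
      have fneg: "(- x) ^ q = - (x ^ q)" for x :: 'a
      proof -
        have "(x + - x) ^ q = x ^ q + (- x) ^ q" by (rule fadd)
        then show ?thesis using qpos by (simp add: eq_neg_iff_add_eq_0 add.commute zero_power)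
      qed
      have cq: "c ^ q = c" unfolding c_def fneg fadd finv by (simp add: add.commute)
      obtain n where n: "c = \<xi> ^ n" using gen False by blast
      have "c ^ (q - 1) = 1"
      proof -
        have "c ^ (q - 1) * c = c ^ Suc (q - 1)" by (simp only: power_Suc2)
        then have "c ^ (q - 1) * c = c" using cq qpos by simp
        then show ?thesis using False by simp
      qed
      then have e: "\<xi> ^ (n * (q - 1)) = 1" using n by (simp add: power_mult)
      define r where "r = (n * (q - 1)) mod N"
      have "\<xi> ^ (n * (q - 1)) = \<xi> ^ (N * ((n * (q - 1)) div N) + r)" unfolding r_def by simp
      also have "\<dots> = (\<xi> ^ N) ^ ((n * (q - 1)) div N) * \<xi> ^ r" by (simp only: power_add power_mult)
      finally have "\<xi> ^ (n * (q - 1)) = (\<xi> ^ N) ^ ((n * (q - 1)) div N) * \<xi> ^ r" .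
      then have "\<xi> ^ r = 1" using e xiN by simp
      moreover have "r < N" unfolding r_def using Npos by simp
      ultimately have "r = 0" using ord by (meson leD neq0_conv)
      then have "N dvd n * (q - 1)" unfolding r_def by (simp add: dvd_eq_mod_eq_0)
      then have "(q - 1) * (q + 1) dvd (q - 1) * n" unfolding N_eq by (simp add: mult.commute)
      then have "q + 1 dvd n" using q2 nat_mult_dvd_cancel1[of "q - 1" "q + 1" n] by simp
      then obtain j where j: "n = (q + 1) * j" by blast
      have "(\<xi> ^ j) ^ q * \<xi> ^ j = c" unfolding n j
        by (simp add: power_mult[symmetric] power_add[symmetric] algebra_simps)
      then show ?thesis unfolding c_def by blast
    qed
  qed
  interpret su3main q A \<alpha> \<omega>
    by unfold_locales (use fadd finv qpos A_norm al om om_q nsurj in auto)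
  have rep: "rep_C3 q \<xi> \<alpha> l = uu A \<alpha>"
  proof -
    have "inverse A = A ^ q" using A_norm by (metis inverse_unique mult.commute)
    then show ?thesis unfolding rep_m3 uu_def A_def by simp
  qed
  show ?thesis using main_irred unfolding C3_class_def rep CC_def .
qed

end
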